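(* Let $\Theta$, $P$, $Q$, $K$, $\mathcal{D}$, $\mathcal{S}\sim\mathcal{D}^N$, $\ell$, $L$ be as in the context, with $P,Q$ fixed independently of $\mathcal{S}$ and $\ell$ taking values in $[0,L]$. Let $d$ be a metric on $\Theta^K$, let $\rho>0$, and define the cost $c(\boldsymbol{\theta},\boldsymbol{\theta}')=d(\boldsymbol{\theta},\boldsymbol{\theta}')$ if $d(\boldsymbol{\theta},\boldsymbol{\theta}')\le\rho$ and $c(\boldsymbol{\theta},\boldsymbol{\theta}')=+\infty$ otherwise. Let $\mathcal{B}_\rho(\boldsymbol{\theta})=\{\boldsymbol{\theta}'\in\Theta^K: d(\boldsymbol{\theta},\boldsymbol{\theta}')\le\rho\}$. Then for every $\delta\in(0,1)$, with probability at least $1-\delta$ over the choice of $\mathcal{S}\sim\mathcal{D}^N$, $$\mathcal{L}_{\mathcal{D}}(Q^K)\le\mathbb{E}_{\boldsymbol{\theta}\sim Q^K}\Big[\max_{\boldsymbol{\theta}'\in\mathcal{B}_\rho(\boldsymbol{\theta})}\mathcal{L}_{\mathcal{S}}(\boldsymbol{\theta}')\Big]+L\sqrt{\frac{K\,D_{KL}(Q\|P)+\log\frac1\delta}{2N}}.$$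
   Context: $\Theta$ is a model space, $P,Q$ probability distributions on $\Theta$, $K\ge1$ an integer, and $Q^K=Q\otimes\cdots\otimes Q$ ($K$ factors) the product distribution on $\Theta^K$, whose elements are written $\boldsymbol{\theta}=(\theta_1,\dots,\theta_K)$. $\mathcal{D}$ is a distribution over data/label pairs and $\mathcal{S}=\{(x_j,y_j)\}_{j=1}^N$ an i.i.d. sample. Given a per-model loss $l(\theta;x,y)$, a divergence loss $l_{div}(\theta_{1:K};x,y)$ and $\alpha>0$, $\ell(\boldsymbol{\theta};x,y)=\frac1K\sum_{i=1}^K l(\theta_i;x,y)+\alpha\,l_{div}(\theta_{1:K};x,y)$. $\mathcal{L}_{\mathcal{D}}(\boldsymbol{\theta})=\mathbb{E}_{(x,y)\sim\mathcal{D}}[\ell(\boldsymbol{\theta};x,y)]$, $\mathcal{L}_{\mathcal{S}}(\boldsymbol{\theta})=\frac1N\sum_{j=1}^N\ell(\boldsymbol{\theta};x_j,y_j)$, $\mathcal{L}_{\mathcal{D}}(Q^K)=\mathbb{E}_{\boldsymbol{\theta}\sim Q^K}[\mathcal{L}_{\mathcal{D}}(\boldsymbol{\theta})]$. $D_{KL}$ is the Kullback–Leibler divergence. *)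

theory Defs
  imports "HOL-Probability.Probability"
begin

text \<open>Ensembles \<open>\<theta> = (\<theta>_1,...,\<theta>_K)\<close> are represented as functions \<open>nat \<Rightarrow> 'a\<close>
  (indices \<open>0..<K\<close>); \<open>\<Theta>^K\<close> is the space of the product measure \<open>PiM {..<K}\<close>.\<close>

definition ens_loss ::
  "nat \<Rightarrow> real \<Rightarrow> ('a \<Rightarrow> 'x \<Rightarrow> 'y \<Rightarrow> real) \<Rightarrow> ((nat \<Rightarrow> 'a) \<Rightarrow> 'x \<Rightarrow> 'y \<Rightarrow> real)
     \<Rightarrow> (nat \<Rightarrow> 'a) \<Rightarrow> 'x \<Rightarrow> 'y \<Rightarrow> real" where
  "ens_loss K \<alpha> l ldiv \<theta> x y = (\<Sum>i<K. l (\<theta> i) x y) / real K + \<alpha> * ldiv \<theta> x y"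

definition pop_risk :: "('x \<times> 'y) measure \<Rightarrow> ((nat \<Rightarrow> 'a) \<Rightarrow> 'x \<Rightarrow> 'y \<Rightarrow> real) \<Rightarrow> (nat \<Rightarrow> 'a) \<Rightarrow> real" where
  "pop_risk D lf \<theta> = (\<integral>z. lf \<theta> (fst z) (snd z) \<partial>D)"

definition emp_risk :: "nat \<Rightarrow> (nat \<Rightarrow> 'x \<times> 'y) \<Rightarrow> ((nat \<Rightarrow> 'a) \<Rightarrow> 'x \<Rightarrow> 'y \<Rightarrow> real) \<Rightarrow> (nat \<Rightarrow> 'a) \<Rightarrow> real" where
  "emp_risk N S lf \<theta> = (\<Sum>j<N. lf \<theta> (fst (S j)) (snd (S j))) / real N"

definition dball :: "'b set \<Rightarrow> ('b \<Rightarrow> 'b \<Rightarrow> real) \<Rightarrow> real \<Rightarrow> 'b \<Rightarrow> 'b set" where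
  "dball X d \<rho> \<theta> = {\<theta>' \<in> X. d \<theta> \<theta>' \<le> \<rho>}"

definition is_metric_on :: "'b set \<Rightarrow> ('b \<Rightarrow> 'b \<Rightarrow> real) \<Rightarrow> bool" where
  "is_metric_on X d \<longleftrightarrow>
     (\<forall>x\<in>X. \<forall>y\<in>X. 0 \<le> d x y \<and> (d x y = 0 \<longleftrightarrow> x = y) \<and> d x y = d y x) \<and>
     (\<forall>x\<in>X. \<forall>y\<in>X. \<forall>z\<in>X. d x z \<le> d x y + d y z)"

end

theory Submission
  imports Defs
begin

lemma DV_ineq:
  fixes M :: "'a measure" and r g :: "'a \<Rightarrow> real" and B :: real
  assumes M: "prob_space M"
    and r[measurable]: "r \<in> borel_measurable M" and r_nn: "\<And>x. 0 \<le> r x"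
    and N: "prob_space (density M r)"
    and g[measurable]: "g \<in> borel_measurable M"
    and gB: "\<And>x. x \<in> space M \<Longrightarrow> \<bar>g x\<bar> \<le> B"
    and lr: "integrable (density M r) (\<lambda>x. ln (r x))"
  shows "(\<integral>x. g x \<partial>density M r) \<le> (\<integral>x. ln (r x) \<partial>density M r) + ln (\<integral>x. exp (g x) \<partial>M)"
proof -
  interpret M: prob_space M by fact
  interpret N: prob_space "density M r" by fact
  let ?N = "density M r"
  define Z where "Z = (\<integral>x. exp (g x) \<partial>M)"
  have intexp: "integrable M (\<lambda>x. exp (g x))"
    by (rule M.integrable_const_bound[where B="exp B"]) (auto intro!: AE_I2 dest!: gB simp: abs_le_iff)
  have "(\<integral>x. exp (- B) \<partial>M) \<le> Z" unfolding Z_def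
    by (intro integral_mono intexp) (auto dest: gB)
  then have "exp (- B) \<le> Z" using M.prob_space by simp
  then have Zpos: "Z > 0" by (meson exp_gt_zero less_le_trans)
  define h where "h x = exp (g x) / r x" for x
  have h_meas[measurable]: "h \<in> borel_measurable M" unfolding h_def by measurable
  have rh: "r x *\<^sub>R h x = (if r x = 0 then 0 else exp (g x))" for x
    by (auto simp: h_def)
  have inth: "integrable M (\<lambda>x. r x *\<^sub>R h x)"
    unfolding rh
    by (rule M.integrable_const_bound[where B="exp B"]) (auto intro!: AE_I2 dest!: gB simp: abs_le_iff)
  have intNh: "integrable ?N h"
    using inth by (subst integrable_density) (auto simp: r_nn)
  have "(\<integral>x. h x \<partial>?N) = (\<integral>x. r x *\<^sub>R h x \<partial>M)"
    by (rule integral_density) (auto simp: r_nn)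
  also have "\<dots> \<le> Z" unfolding Z_def
    by (intro integral_mono inth intexp) (auto simp: h_def)
  finally have hZ: "(\<integral>x. h x \<partial>?N) \<le> Z" .
  have intNg: "integrable ?N g"
    by (rule N.integrable_const_bound[where B=B]) (auto intro!: AE_I2 dest!: gB simp: abs_le_iff)
  have ae: "AE x in ?N. g x - ln (r x) \<le> ln Z + h x / Z - 1"
  proof -
    have "AE x in ?N. 0 < r x"
      by (subst AE_density) auto
    then show ?thesis
    proof (rule eventually_mono)
      fix x assume rx: "0 < r x"
      have hx: "h x > 0" using rx by (simp add: h_def)
      have "ln (h x / Z) \<le> h x / Z - 1"
        by (rule ln_le_minus_one) (use hx Zpos in simp)
      moreover have "ln (h x / Z) = g x - ln (r x) - ln Z"
        using hx Zpos rx by (simp add: ln_div ln_mult h_def)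
      ultimately show "g x - ln (r x) \<le> ln Z + h x / Z - 1" by simp
    qed
  qed
  have "(\<integral>x. g x - ln (r x) \<partial>?N) \<le> (\<integral>x. ln Z + h x / Z - 1 \<partial>?N)"
    by (rule integral_mono_AE) (use ae intNg lr intNh in auto)
  also have "(\<integral>x. ln Z + h x / Z - 1 \<partial>?N) = ln Z + (\<integral>x. h x \<partial>?N) / Z - 1"
    using intNh N.prob_space by simp
  also have "\<dots> \<le> ln Z" using hZ Zpos by (simp add: field_simps)
  finally show ?thesis using intNg lr by (simp add: Z_def)
qed

lemma PiM_density_prod:
  fixes P :: "'a measure" and f :: "'a \<Rightarrow> real" and I :: "'i set"
  assumes P: "prob_space P" and f[measurable]: "f \<in> borel_measurable P" and fnn: "\<And>x. 0 \<le> f x"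
    and Q: "prob_space (density P f)" and I: "finite I"
  shows "PiM I (\<lambda>_. density P f) = density (PiM I (\<lambda>_. P)) (\<lambda>\<theta>. \<Prod>i\<in>I. f (\<theta> i))"
proof -
  interpret PP: product_prob_space "\<lambda>_. P" I by (intro product_prob_spaceI P)
  interpret QQ: product_prob_space "\<lambda>_. density P f" I by (intro product_prob_spaceI Q)
  have [measurable]: "(\<lambda>\<theta>. \<Prod>i\<in>I. f (\<theta> i)) \<in> borel_measurable (PiM I (\<lambda>_. P))"
    by measurable
  show ?thesis
  proof (rule QQ.PiM_eqI[symmetric, OF I])
    show "sets (density (PiM I (\<lambda>_. P)) (\<lambda>\<theta>. \<Prod>i\<in>I. f (\<theta> i))) = sets (PiM I (\<lambda>_. density P f))"
      unfolding sets_density by (rule sets_PiM_cong) (simp_all only: sets_density)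
  next
    fix A assume A: "\<And>i. i \<in> I \<Longrightarrow> A i \<in> sets (density P f)"
    then have A'[measurable]: "\<And>i. i \<in> I \<Longrightarrow> A i \<in> sets P" by simp
    have PiE_sets: "Pi\<^sub>E I A \<in> sets (PiM I (\<lambda>_. P))"
      using A' by (intro sets_PiM_I_finite I) auto
    have "emeasure (density (PiM I (\<lambda>_. P)) (\<lambda>\<theta>. \<Prod>i\<in>I. f (\<theta> i))) (Pi\<^sub>E I A)
        = (\<integral>\<^sup>+\<theta>. ennreal (\<Prod>i\<in>I. f (\<theta> i)) * indicator (Pi\<^sub>E I A) \<theta> \<partial>PiM I (\<lambda>_. P))"
      by (rule emeasure_density) (auto simp: PiE_sets)
    also have "\<dots> = (\<integral>\<^sup>+\<theta>. (\<Prod>i\<in>I. ennreal (f (\<theta> i)) * indicator (A i) (\<theta> i)) \<partial>PiM I (\<lambda>_. P))"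
    proof (rule nn_integral_cong)
      fix \<theta> assume "\<theta> \<in> space (PiM I (\<lambda>_. P))"
      then have ext: "\<theta> \<in> extensional I" by (simp add: space_PiM PiE_def)
      show "ennreal (\<Prod>i\<in>I. f (\<theta> i)) * indicator (Pi\<^sub>E I A) \<theta> = (\<Prod>i\<in>I. ennreal (f (\<theta> i)) * indicator (A i) (\<theta> i))"
      proof (cases "\<theta> \<in> Pi\<^sub>E I A")
        case True
        then show ?thesis by (simp add: prod_ennreal fnn PiE_iff)
      next
        case False
        with ext obtain j where "j \<in> I" "\<theta> j \<notin> A j" by (auto simp: PiE_iff)
        then have "(\<Prod>i\<in>I. ennreal (f (\<theta> i)) * indicator (A i) (\<theta> i)) = 0"
          by (intro prod_zero[OF I] bexI[of _ j]) auto
        then show ?thesis using False by simp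
      qed
    qed
    also have "\<dots> = (\<Prod>i\<in>I. \<integral>\<^sup>+x. ennreal (f x) * indicator (A i) x \<partial>P)"
      by (rule PP.product_nn_integral_prod[OF I, where f="\<lambda>i x. ennreal (f x) * indicator (A i) x"]) simp
    also have "\<dots> = (\<Prod>i\<in>I. emeasure (density P f) (A i))"
      by (intro prod.cong refl emeasure_density[symmetric]) auto
    finally show "emeasure (density (PiM I (\<lambda>_. P)) (\<lambda>\<theta>. \<Prod>i\<in>I. f (\<theta> i))) (Pi\<^sub>E I A) = (\<Prod>i\<in>I. emeasure (density P f) (A i))" .
  qed
qed

lemma hoeff_step:
  fixes D :: "'z measure" and F :: "'z \<Rightarrow> real"
  assumes D: "prob_space D" and N: "N \<ge> 1" and lam: "lam > 0"
    and F[measurable]: "F \<in> borel_measurable D"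
    and FB: "\<And>z. z \<in> space D \<Longrightarrow> 0 \<le> F z \<and> F z \<le> L"
  shows "(\<integral>\<^sup>+S. ennreal (exp (lam * ((\<integral>z. F z \<partial>D) - (\<Sum>j<N. F (S j)) / real N))) \<partial>PiM {..<N} (\<lambda>_. D))
         \<le> ennreal (exp (lam\<^sup>2 * L\<^sup>2 / (8 * real N)))"
proof -
  interpret D: prob_space D by fact
  interpret DD: product_prob_space "\<lambda>_. D" "{..<N}" by (intro product_prob_spaceI D)
  interpret X: interval_bounded_random_variable D "\<lambda>z. - F z" "- L" 0
    by unfold_locales (auto intro!: AE_I2 dest: FB)
  define l where "l = lam / real N"
  have l: "l > 0" using lam N by (simp add: l_def)
  define \<mu> where "\<mu> = (\<integral>z. F z \<partial>D)"
  have E: "D.expectation (\<lambda>z. - F z) = - \<mu>" by (simp add: \<mu>_def)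
  have "(\<integral>\<^sup>+S. ennreal (exp (lam * (\<mu> - (\<Sum>j<N. F (S j)) / real N))) \<partial>PiM {..<N} (\<lambda>_. D))
      = (\<integral>\<^sup>+S. (\<Prod>j<N. ennreal (exp (l * (- F (S j) - (- \<mu>))))) \<partial>PiM {..<N} (\<lambda>_. D))"
  proof (rule nn_integral_cong)
    fix S
    have "lam * (\<mu> - (\<Sum>j<N. F (S j)) / real N) = (\<Sum>j<N. l * (- F (S j) - (- \<mu>)))"
    proof -
      have "(\<Sum>j<N. l * (- F (S j) - (- \<mu>))) = l * (real N * \<mu> - (\<Sum>j<N. F (S j)))"
        by (simp add: sum_subtractf sum_distrib_left algebra_simps)
      also have "\<dots> = lam * (\<mu> - (\<Sum>j<N. F (S j)) / real N)"
        using N by (simp add: l_def field_simps)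
      finally show ?thesis by simp
    qed
    then show "ennreal (exp (lam * (\<mu> - (\<Sum>j<N. F (S j)) / real N))) = (\<Prod>j<N. ennreal (exp (l * (- F (S j) - (- \<mu>)))))"
      by (simp add: exp_sum prod_ennreal)
  qed
  also have "\<dots> = (\<Prod>j<N. \<integral>\<^sup>+z. ennreal (exp (l * (- F z - (- \<mu>)))) \<partial>D)"
    by (rule DD.product_nn_integral_prod[where f="\<lambda>j z. ennreal (exp (l * (- F z - (- \<mu>))))"]) auto
  also have "\<dots> \<le> (\<Prod>j<N. ennreal (exp (l\<^sup>2 * (0 - - L)\<^sup>2 / 8)))"
  proof (intro prod_mono_ennreal)
    fix j
    show "(\<integral>\<^sup>+z. ennreal (exp (l * (- F z - (- \<mu>)))) \<partial>D) \<le> ennreal (exp (l\<^sup>2 * (0 - - L)\<^sup>2 / 8))"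
      using X.Hoeffdings_lemma_nn_integral[OF l] unfolding E by simp
  qed
  also have "\<dots> = ennreal (exp (lam\<^sup>2 * L\<^sup>2 / (8 * real N)))"
  proof -
    have "(\<Prod>j<N. ennreal (exp (l\<^sup>2 * (0 - - L)\<^sup>2 / 8))) = ennreal (\<Prod>j<N. exp (l\<^sup>2 * L\<^sup>2 / 8))"
      by (simp add: ennreal_power)
    also have "(\<Prod>j<N. exp (l\<^sup>2 * L\<^sup>2 / 8)) = exp (real N * (l\<^sup>2 * L\<^sup>2 / 8))"
      by (simp add: exp_of_nat_mult[symmetric])
    also have "real N * (l\<^sup>2 * L\<^sup>2 / 8) = lam\<^sup>2 * L\<^sup>2 / (8 * real N)"
      using N by (simp add: l_def power2_eq_square field_simps)
    finally show ?thesis .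
  qed
  finally show ?thesis by (simp add: \<mu>_def)
qed

lemma KL_prod:
  fixes Q :: "'a measure" and qr :: "'a \<Rightarrow> real" and I :: "'i set"
  assumes Q: "prob_space Q" and qm[measurable]: "qr \<in> borel_measurable Q"
    and qpos: "AE x in Q. qr x > 0" and qint: "integrable Q (\<lambda>x. ln (qr x))" and I: "finite I"
  shows "integrable (PiM I (\<lambda>_. Q)) (\<lambda>\<theta>. ln (\<Prod>i\<in>I. qr (\<theta> i)))"
    and "(\<integral>\<theta>. ln (\<Prod>i\<in>I. qr (\<theta> i)) \<partial>PiM I (\<lambda>_. Q)) = real (card I) * (\<integral>x. ln (qr x) \<partial>Q)"
proof -
  let ?QK = "PiM I (\<lambda>_. Q)"
  have ae: "AE \<theta> in ?QK. ln (\<Prod>i\<in>I. qr (\<theta> i)) = (\<Sum>i\<in>I. ln (qr (\<theta> i)))"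
  proof -
    have "AE \<theta> in ?QK. \<forall>i\<in>I. qr (\<theta> i) > 0"
      by (intro eventually_ball_finite I ballI AE_PiM_component[where M="\<lambda>_. Q"] Q qpos)
    then show ?thesis
      by (rule eventually_mono) (intro ln_prod I, auto)
  qed
  have comp: "i \<in> I \<Longrightarrow> distr ?QK Q (\<lambda>\<theta>. \<theta> i) = Q" for i
    by (rule distr_PiM_component[where M="\<lambda>_. Q"]) (auto simp: Q)
  have inti: "integrable ?QK (\<lambda>\<theta>. ln (qr (\<theta> i)))" if i: "i \<in> I" for i
  proof -
    have "integrable (distr ?QK Q (\<lambda>\<theta>. \<theta> i)) (\<lambda>x. ln (qr x))"
      using comp[OF i] qint by simp
    then show ?thesis
      by (subst (asm) integrable_distr_eq) (use i in auto)
  qed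
  have intsum: "integrable ?QK (\<lambda>\<theta>. \<Sum>i\<in>I. ln (qr (\<theta> i)))"
    using inti by (intro Bochner_Integration.integrable_sum) auto
  show "integrable ?QK (\<lambda>\<theta>. ln (\<Prod>i\<in>I. qr (\<theta> i)))"
  proof (rule integrable_cong_AE_imp[OF intsum])
    show "AE x in ?QK. (\<Sum>i\<in>I. ln (qr (x i))) = ln (\<Prod>i\<in>I. qr (x i))"
      using ae by (rule eventually_mono) simp
  qed (use I in auto)
  have "(\<integral>\<theta>. ln (\<Prod>i\<in>I. qr (\<theta> i)) \<partial>?QK) = (\<integral>\<theta>. (\<Sum>i\<in>I. ln (qr (\<theta> i))) \<partial>?QK)"
    by (rule integral_cong_AE) (use ae in \<open>auto simp: I\<close>)
  also have "\<dots> = (\<Sum>i\<in>I. \<integral>\<theta>. ln (qr (\<theta> i)) \<partial>?QK)"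
    using inti by (intro Bochner_Integration.integral_sum) auto
  also have "\<dots> = (\<Sum>i\<in>I. \<integral>x. ln (qr x) \<partial>Q)"
  proof (rule sum.cong[OF refl])
    fix i assume i: "i \<in> I"
    have "(\<integral>x. ln (qr x) \<partial>Q) = (\<integral>x. ln (qr x) \<partial>distr ?QK Q (\<lambda>\<theta>. \<theta> i))"
      using comp[OF i] by simp
    also have "\<dots> = (\<integral>\<theta>. ln (qr (\<theta> i)) \<partial>?QK)"
      by (rule integral_distr) (use i in auto)
    finally show "(\<integral>\<theta>. ln (qr (\<theta> i)) \<partial>?QK) = (\<integral>x. ln (qr x) \<partial>Q)" by simp
  qed
  finally show "(\<integral>\<theta>. ln (\<Prod>i\<in>I. qr (\<theta> i)) \<partial>?QK) = real (card I) * (\<integral>x. ln (qr x) \<partial>Q)"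
    by simp
qed

theorem corollary1:
  fixes P Q :: "'a measure"
    and D :: "('x \<times> 'y) measure"
    and K N :: nat
    and \<alpha> L \<rho> \<delta> :: real
    and l :: "'a \<Rightarrow> 'x \<Rightarrow> 'y \<Rightarrow> real"
    and ldiv :: "(nat \<Rightarrow> 'a) \<Rightarrow> 'x \<Rightarrow> 'y \<Rightarrow> real"
    and d :: "(nat \<Rightarrow> 'a) \<Rightarrow> (nat \<Rightarrow> 'a) \<Rightarrow> real"
  assumes P: "prob_space P" and Q: "prob_space Q" and sets_PQ: "sets Q = sets P"
    and D: "prob_space D"
    and K: "K \<ge> 1" and N: "N \<ge> 1"
    and alpha: "\<alpha> > 0"
    and loss_meas: "(\<lambda>(\<theta>, z). ens_loss K \<alpha> l ldiv \<theta> (fst z) (snd z))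
                      \<in> borel_measurable (PiM {..<K} (\<lambda>_. Q) \<Otimes>\<^sub>M D)"
    and loss_bounded: "\<And>\<theta> z. \<theta> \<in> space (PiM {..<K} (\<lambda>_. Q)) \<Longrightarrow> z \<in> space D \<Longrightarrow>
                      0 \<le> ens_loss K \<alpha> l ldiv \<theta> (fst z) (snd z) \<and>
                      ens_loss K \<alpha> l ldiv \<theta> (fst z) (snd z) \<le> L"
    and metric: "is_metric_on (space (PiM {..<K} (\<lambda>_. Q))) d"
    and rho: "\<rho> > 0"
    and KL_finite: "absolutely_continuous P Q" "integrable Q (entropy_density (exp 1) P Q)"
    and delta: "0 < \<delta>" "\<delta> < 1"
  shows "\<exists>E \<in> sets (PiM {..<N} (\<lambda>_. D)).
           measure (PiM {..<N} (\<lambda>_. D)) E \<ge> 1 - \<delta> \<and>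
           (\<forall>S \<in> E.
              ennreal (\<integral>\<theta>. pop_risk D (ens_loss K \<alpha> l ldiv) \<theta> \<partial>(PiM {..<K} (\<lambda>_. Q)))
              \<le> (\<integral>\<^sup>+\<theta>. ennreal (SUP \<theta>' \<in> dball (space (PiM {..<K} (\<lambda>_. Q))) d \<rho> \<theta>.
                                      emp_risk N S (ens_loss K \<alpha> l ldiv) \<theta>')
                     \<partial>(PiM {..<K} (\<lambda>_. Q)))
                 + ennreal (L * sqrt ((real K * KL_divergence (exp 1) P Q + ln (1 / \<delta>))
                                     / (2 * real N))))"
proof -
  interpret P: prob_space P by fact
  interpret Q: prob_space Q by fact
  interpret D: prob_space D by fact
  let ?QK = "PiM {..<K} (\<lambda>_. Q)"
  let ?PK = "PiM {..<K} (\<lambda>_. P)"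
  let ?DN = "PiM {..<N} (\<lambda>_. D)"
  let ?lf = "ens_loss K \<alpha> l ldiv"
  interpret QK: prob_space ?QK by (intro prob_space_PiM Q)
  interpret PK: prob_space ?PK by (intro prob_space_PiM P)
  interpret DN: prob_space ?DN by (intro prob_space_PiM D)
  have setsPK: "sets ?PK = sets ?QK" by (rule sets_PiM_cong) (simp_all add: sets_PQ)
  have spacePK: "space ?PK = space ?QK" using setsPK by (rule sets_eq_imp_space_eq)
  have lmQ: "(\<lambda>(\<theta>, z). ?lf \<theta> (fst z) (snd z)) \<in> borel_measurable (?QK \<Otimes>\<^sub>M D)"
    by (rule loss_meas)
  have lm: "(\<lambda>(\<theta>, z). ?lf \<theta> (fst z) (snd z)) \<in> borel_measurable (?PK \<Otimes>\<^sub>M D)"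
    using lmQ by (subst measurable_cong_sets[OF sets_pair_measure_cong[OF setsPK refl] refl])
  define R where "R \<theta> = pop_risk D ?lf \<theta>" for \<theta>
  define Rs where "Rs S \<theta> = emp_risk N S ?lf \<theta>" for S \<theta>
  have R_meas: "R \<in> borel_measurable ?PK"
    unfolding R_def pop_risk_def by (rule D.borel_measurable_lebesgue_integral[OF lm])
  have bnd: "0 \<le> ?lf \<theta> (fst z) (snd z) \<and> ?lf \<theta> (fst z) (snd z) \<le> L"
    if "\<theta> \<in> space ?PK" "z \<in> space D" for \<theta> z
    using loss_bounded[of \<theta> z] that spacePK by simp
  have F_meas: "(\<lambda>z. ?lf \<theta> (fst z) (snd z)) \<in> borel_measurable D" if "\<theta> \<in> space ?PK" for \<theta>
    using measurable_Pair2[OF lm that] by simp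
  have R_bnd: "0 \<le> R \<theta> \<and> R \<theta> \<le> L" if th: "\<theta> \<in> space ?PK" for \<theta>
  proof -
    have int: "integrable D (\<lambda>z. ?lf \<theta> (fst z) (snd z))"
      by (rule D.integrable_const_bound[where B=L]) (auto intro!: AE_I2 F_meas th dest: bnd[OF th])
    have "(\<integral>z. ?lf \<theta> (fst z) (snd z) \<partial>D) \<le> (\<integral>z. L \<partial>D)"
      by (intro integral_mono int) (auto dest: bnd[OF th])
    moreover have "0 \<le> (\<integral>z. ?lf \<theta> (fst z) (snd z) \<partial>D)"
      by (intro integral_nonneg_AE AE_I2) (auto dest: bnd[OF th])
    ultimately show ?thesis by (simp add: R_def pop_risk_def D.prob_space)
  qed
  have Rs_bnd: "0 \<le> Rs S \<theta> \<and> Rs S \<theta> \<le> L" if th: "\<theta> \<in> space ?PK" and S: "S \<in> space ?DN" for S \<theta>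
  proof -
    have Sj: "S j \<in> space D" if "j < N" for j using S that by (auto simp: space_PiM)
    have "(\<Sum>j<N. ?lf \<theta> (fst (S j)) (snd (S j))) \<le> (\<Sum>j<N. L)"
      by (intro sum_mono) (auto dest: bnd[OF th Sj])
    moreover have "0 \<le> (\<Sum>j<N. ?lf \<theta> (fst (S j)) (snd (S j)))"
      by (intro sum_nonneg) (auto dest: bnd[OF th Sj])
    ultimately show ?thesis using N by (simp add: Rs_def emp_risk_def field_simps)
  qed
  have lf_joint: "(\<lambda>x. ?lf (snd x) (fst (fst x j)) (snd (fst x j))) \<in> borel_measurable (?DN \<Otimes>\<^sub>M ?PK)"
    if j: "j < N" for j
  proof -
    have "(\<lambda>x. (snd x, fst x j)) \<in> measurable (?DN \<Otimes>\<^sub>M ?PK) (?PK \<Otimes>\<^sub>M D)"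
      using j by (intro measurable_Pair measurable_snd measurable_compose[OF measurable_fst measurable_component_singleton]) auto
    from measurable_compose[OF this lm] show ?thesis by simp
  qed
  have Rs_joint: "(\<lambda>x. Rs (fst x) (snd x)) \<in> borel_measurable (?DN \<Otimes>\<^sub>M ?PK)"
    unfolding Rs_def emp_risk_def
    by (intro borel_measurable_divide borel_measurable_const borel_measurable_sum lf_joint) auto
  have R_joint: "(\<lambda>x. R (snd x)) \<in> borel_measurable (?DN \<Otimes>\<^sub>M ?PK)"
    by (rule measurable_compose[OF measurable_snd R_meas])
  show ?thesis
  proof (cases "L > 0")
    case False
    have "(\<integral>\<theta>. pop_risk D ?lf \<theta> \<partial>?QK) = (\<integral>\<theta>. 0 \<partial>?QK)"
      by (rule Bochner_Integration.integral_cong[OF refl]) (use R_bnd False spacePK in \<open>force simp: R_def\<close>)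
    then have zero: "ennreal (\<integral>\<theta>. pop_risk D ?lf \<theta> \<partial>?QK) = 0" by simp
    show ?thesis
      by (rule bexI[of _ "space ?DN"]) (use delta DN.prob_space in \<open>auto simp: zero\<close>)
  next
    case Lpos: True
    define qr where "qr x = enn2real (RN_deriv P Q x)" for x
    have qr_meas[measurable]: "qr \<in> borel_measurable P" unfolding qr_def by measurable
    have qr_nn: "0 \<le> qr x" for x by (simp add: qr_def)
    have qr_measQ: "qr \<in> borel_measurable Q"
      by (subst measurable_cong_sets[OF sets_PQ refl]) (rule qr_meas)
    have Qdens: "Q = density P (\<lambda>x. ennreal (qr x))"
    proof -
      have d1: "density P (RN_deriv P Q) = Q" by (rule P.density_RN_deriv[OF KL_finite(1) sets_PQ])
      have fin: "AE x in P. RN_deriv P Q x \<noteq> \<infinity>"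
        by (rule P.RN_deriv_finite[OF _ KL_finite(1) sets_PQ]) (rule Q.sigma_finite_measure_axioms)
      have "AE x in P. RN_deriv P Q x = ennreal (qr x)"
        using fin by (rule eventually_mono) (simp add: qr_def less_top)
      then have "density P (RN_deriv P Q) = density P (\<lambda>x. ennreal (qr x))"
        by (intro density_cong) auto
      with d1 show ?thesis by simp
    qed
    have Qprob_d: "prob_space (density P (\<lambda>x. ennreal (qr x)))" using Q Qdens by simp
    have QKdens: "?QK = density ?PK (\<lambda>\<theta>. ennreal (\<Prod>i<K. qr (\<theta> i)))"
      using PiM_density_prod[OF P qr_meas qr_nn Qprob_d, of "{..<K}"] unfolding Qdens[symmetric] by simp
    have ed: "entropy_density (exp 1) P Q = (\<lambda>x. ln (qr x))"
      by (simp add: fun_eq_iff entropy_density_def qr_def log_def)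
    have KLeq: "KL_divergence (exp 1) P Q = (\<integral>x. ln (qr x) \<partial>Q)"
      unfolding KL_divergence_def ed ..
    have qint: "integrable Q (\<lambda>x. ln (qr x))" using KL_finite(2) unfolding ed .
    have qpos: "AE x in Q. qr x > 0"
    proof (subst Qdens, subst AE_density)
      show "AE x in P. 0 < ennreal (qr x) \<longrightarrow> 0 < qr x" by (intro AE_I2) simp
    qed simp
    note KLP = KL_prod[OF Q qr_measQ qpos qint finite_lessThan[of K]]
    have KL_nn: "0 \<le> KL_divergence (exp 1) P Q"
    proof -
      have "(\<integral>x. 0 \<partial>density P (\<lambda>x. ennreal (qr x))) \<le> (\<integral>x. ln (qr x) \<partial>density P (\<lambda>x. ennreal (qr x)))
              + ln (\<integral>x. exp 0 \<partial>P)"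
        by (rule DV_ineq[OF P qr_meas qr_nn Qprob_d, where B=0]) (use qint Qdens in auto)
      then show ?thesis using KLeq Qdens P.prob_space by simp
    qed
    define C where "C = real K * KL_divergence (exp 1) P Q + ln (1 / \<delta>)"
    have C: "C > 0"
    proof -
      have "ln (1 / \<delta>) > 0" using delta by (intro ln_gt_zero) simp
      moreover have "0 \<le> real K * KL_divergence (exp 1) P Q" using KL_nn by simp
      ultimately show ?thesis by (simp add: C_def)
    qed
    define lam where "lam = sqrt (8 * real N * C) / L"
    have lam: "lam > 0" using C Lpos N by (simp add: lam_def)
    define M0 where "M0 = exp (lam\<^sup>2 * L\<^sup>2 / (8 * real N))"
    have M0: "M0 > 0" by (simp add: M0_def)
    define G where "G S \<theta> = lam * (R \<theta> - Rs S \<theta>)" for S \<theta>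
    have G_joint: "(\<lambda>x. G (fst x) (snd x)) \<in> borel_measurable (?DN \<Otimes>\<^sub>M ?PK)"
      unfolding G_def by (intro borel_measurable_times borel_measurable_diff borel_measurable_const R_joint Rs_joint)
    have G_bnd: "\<bar>G S \<theta>\<bar> \<le> lam * L" if "\<theta> \<in> space ?PK" "S \<in> space ?DN" for S \<theta>
    proof -
      have "\<bar>R \<theta> - Rs S \<theta>\<bar> \<le> L" using R_bnd[OF that(1)] Rs_bnd[OF that] by (simp add: abs_le_iff)
      then show ?thesis using lam by (simp add: G_def abs_mult mult_left_mono)
    qed
    have hA: "(\<integral>\<^sup>+S. ennreal (exp (G S \<theta>)) \<partial>?DN) \<le> ennreal M0" if th: "\<theta> \<in> space ?PK" for \<theta>
      using hoeff_step[OF D N lam F_meas[OF th] bnd[OF th]]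
      by (simp add: G_def R_def Rs_def pop_risk_def emp_risk_def M0_def)
    define Zf where "Zf S = (\<integral>\<^sup>+\<theta>. ennreal (exp (G S \<theta>)) \<partial>?PK)" for S
    have eG_joint: "(\<lambda>(S, \<theta>). ennreal (exp (G S \<theta>))) \<in> borel_measurable (?DN \<Otimes>\<^sub>M ?PK)"
      unfolding case_prod_beta' by (rule measurable_compose[OF measurable_compose[OF G_joint borel_measurable_exp] measurable_ennreal])
    have Zf_meas[measurable]: "Zf \<in> borel_measurable ?DN"
      unfolding Zf_def by (rule PK.borel_measurable_nn_integral[OF eG_joint])
    interpret DP: pair_prob_space ?DN ?PK ..
    have intZf: "(\<integral>\<^sup>+S. Zf S \<partial>?DN) \<le> ennreal M0"
    proof -
      have "(\<integral>\<^sup>+S. Zf S \<partial>?DN) = (\<integral>\<^sup>+\<theta>. (\<integral>\<^sup>+S. ennreal (exp (G S \<theta>)) \<partial>?DN) \<partial>?PK)"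
        using DP.Fubini[OF eG_joint] by (simp add: Zf_def)
      also have "\<dots> \<le> (\<integral>\<^sup>+\<theta>. ennreal M0 \<partial>?PK)"
        by (intro nn_integral_mono hA)
      also have "\<dots> = ennreal M0" by (simp add: PK.emeasure_space_1)
      finally show ?thesis .
    qed
    define E where "E = {S \<in> space ?DN. Zf S \<le> ennreal (M0 / \<delta>)}"
    have E_sets: "E \<in> sets ?DN" unfolding E_def by measurable
    have E_meas: "measure ?DN E \<ge> 1 - \<delta>"
    proof -
      define c where "c = ennreal (\<delta> / M0)"
      have sub: "space ?DN - E \<subseteq> {S \<in> space ?DN. 1 \<le> c * Zf S}"
      proof safe
        fix S assume S: "S \<in> space ?DN" and nE: "S \<notin> E"
        then have lt: "ennreal (M0 / \<delta>) \<le> Zf S" by (simp add: E_def)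
        have "c * ennreal (M0 / \<delta>) = 1"
          unfolding c_def using M0 delta by (simp add: ennreal_mult[symmetric])
        then show "1 \<le> c * Zf S" using lt by (metis mult_left_mono zero_le)
      qed
      have Aset: "{S \<in> space ?DN. 1 \<le> c * Zf S} \<in> sets ?DN" by measurable
      have "emeasure ?DN {S \<in> space ?DN. 1 \<le> c * Zf S} \<le> c * (\<integral>\<^sup>+S. Zf S * indicator (space ?DN) S \<partial>?DN)"
        by (intro nn_integral_Markov_inequality) auto
      also have "(\<integral>\<^sup>+S. Zf S * indicator (space ?DN) S \<partial>?DN) = (\<integral>\<^sup>+S. Zf S \<partial>?DN)"
        by (intro nn_integral_cong) simp
      also have "c * \<dots> \<le> c * ennreal M0" by (intro mult_left_mono intZf) simp
      also have "c * ennreal M0 = ennreal \<delta>"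
        unfolding c_def using M0 delta by (simp add: ennreal_mult[symmetric])
      finally have "emeasure ?DN (space ?DN - E) \<le> ennreal \<delta>"
        using emeasure_mono[OF sub Aset] by (meson order_trans)
      then have "measure ?DN (space ?DN - E) \<le> \<delta>"
        using delta by (simp add: DN.emeasure_eq_measure)
      moreover have "measure ?DN (space ?DN - E) = 1 - measure ?DN E"
        by (rule DN.prob_compl[OF E_sets])
      ultimately show ?thesis by simp
    qed
    show ?thesis
    proof (rule bexI[OF _ E_sets], intro conjI ballI E_meas)
      fix S assume SE: "S \<in> E"
      then have S: "S \<in> space ?DN" and ZS: "Zf S \<le> ennreal (M0 / \<delta>)" by (auto simp: E_def)
      note KLP
      have Rm: "R \<in> borel_measurable ?QK"
        using R_meas by (subst (asm) measurable_cong_sets[OF setsPK refl])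
      have RsmP: "Rs S \<in> borel_measurable ?PK"
        using measurable_Pair2[OF Rs_joint S] by simp
      then have Rsm: "Rs S \<in> borel_measurable ?QK"
        by (subst (asm) measurable_cong_sets[OF setsPK refl])
      have GmP: "G S \<in> borel_measurable ?PK"
        using measurable_Pair2[OF G_joint S] by simp
      have intR: "integrable ?QK R"
        by (rule QK.integrable_const_bound[where B=L]) (use R_bnd spacePK Rm in \<open>auto intro!: AE_I2\<close>)
      have intRs: "integrable ?QK (Rs S)"
        by (rule QK.integrable_const_bound[where B=L]) (use Rs_bnd[OF _ S] spacePK Rsm in \<open>auto intro!: AE_I2\<close>)
      have GB: "\<bar>G S \<theta>\<bar> \<le> lam * L" if "\<theta> \<in> space ?PK" for \<theta> using G_bnd[OF that S] .
      have intexp: "integrable ?PK (\<lambda>\<theta>. exp (G S \<theta>))"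
        by (rule PK.integrable_const_bound[where B="exp (lam * L)"])
           (auto intro!: AE_I2 measurable_compose[OF GmP borel_measurable_exp] dest!: GB simp: abs_le_iff)
      have "ennreal (\<integral>\<theta>. exp (G S \<theta>) \<partial>?PK) = Zf S"
        unfolding Zf_def by (rule nn_integral_eq_integral[symmetric]) (use intexp in auto)
      with ZS have "ennreal (\<integral>\<theta>. exp (G S \<theta>) \<partial>?PK) \<le> ennreal (M0 / \<delta>)" by simp
      then have Zle: "(\<integral>\<theta>. exp (G S \<theta>) \<partial>?PK) \<le> M0 / \<delta>"
        using M0 delta by (subst (asm) ennreal_le_iff) auto
      have "(\<integral>\<theta>. exp (- (lam * L)) \<partial>?PK) \<le> (\<integral>\<theta>. exp (G S \<theta>) \<partial>?PK)"
        by (intro integral_mono intexp) (auto dest!: GB simp: abs_le_iff)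
      then have "exp (- (lam * L)) \<le> (\<integral>\<theta>. exp (G S \<theta>) \<partial>?PK)"
        using PK.prob_space by simp
      then have Zpos: "(\<integral>\<theta>. exp (G S \<theta>) \<partial>?PK) > 0"
        by (meson exp_gt_zero less_le_trans)
      have rho_meas: "(\<lambda>\<theta>. \<Prod>i<K. qr (\<theta> i)) \<in> borel_measurable ?PK" by measurable
      have QKprob: "prob_space (density ?PK (\<lambda>\<theta>. ennreal (\<Prod>i<K. qr (\<theta> i))))"
        using QKdens[symmetric] QK.prob_space_axioms by simp
      have DV: "(\<integral>\<theta>. G S \<theta> \<partial>?QK) \<le> (\<integral>\<theta>. ln (\<Prod>i<K. qr (\<theta> i)) \<partial>?QK) + ln (\<integral>\<theta>. exp (G S \<theta>) \<partial>?PK)"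
        using DV_ineq[OF PK.prob_space_axioms rho_meas _ QKprob GmP GB] KLP(1) QKdens[symmetric]
        by (simp add: prod_nonneg qr_nn)
      have "ln (\<integral>\<theta>. exp (G S \<theta>) \<partial>?PK) \<le> ln (M0 / \<delta>)"
        using Zle Zpos by simp
      also have "ln (M0 / \<delta>) = lam\<^sup>2 * L\<^sup>2 / (8 * real N) + ln (1 / \<delta>)"
        using delta by (simp add: M0_def ln_div)
      finally have lnZ: "ln (\<integral>\<theta>. exp (G S \<theta>) \<partial>?PK) \<le> lam\<^sup>2 * L\<^sup>2 / (8 * real N) + ln (1 / \<delta>)" .
      have "(\<integral>\<theta>. G S \<theta> \<partial>?QK) = lam * ((\<integral>\<theta>. R \<theta> \<partial>?QK) - (\<integral>\<theta>. Rs S \<theta> \<partial>?QK))"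
        unfolding G_def using intR intRs by simp
      with DV lnZ KLP(2) KLeq
      have key: "lam * ((\<integral>\<theta>. R \<theta> \<partial>?QK) - (\<integral>\<theta>. Rs S \<theta> \<partial>?QK)) \<le> C + lam\<^sup>2 * L\<^sup>2 / (8 * real N)"
        by (simp add: C_def)
      define s where "s = sqrt (8 * real N * C)"
      have s: "s > 0" using C N by (simp add: s_def)
      have s2: "s\<^sup>2 = 8 * real N * C" using C N by (simp add: s_def)
      have sq: "sqrt (C / (2 * real N)) = s / (4 * real N)"
        using s s2 N by (intro real_sqrt_unique) (auto simp: field_simps power2_eq_square)
      have bound: "(C + lam\<^sup>2 * L\<^sup>2 / (8 * real N)) / lam = L * sqrt (C / (2 * real N))"
        using s s2 N Lpos unfolding sq lam_def s_def[symmetric]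
        by (simp add: field_simps power2_eq_square)
      have ineq: "(\<integral>\<theta>. R \<theta> \<partial>?QK) \<le> (\<integral>\<theta>. Rs S \<theta> \<partial>?QK) + L * sqrt (C / (2 * real N))"
      proof -
        have "(\<integral>\<theta>. R \<theta> \<partial>?QK) - (\<integral>\<theta>. Rs S \<theta> \<partial>?QK) \<le> (C + lam\<^sup>2 * L\<^sup>2 / (8 * real N)) / lam"
          using key lam by (simp add: field_simps mult.commute)
        then show ?thesis unfolding bound by simp
      qed
      have Rs_le_sup: "Rs S \<theta> \<le> (SUP \<theta>' \<in> dball (space ?QK) d \<rho> \<theta>. emp_risk N S ?lf \<theta>')"
        if th: "\<theta> \<in> space ?QK" for \<theta>
      proof -
        have mem: "\<theta> \<in> dball (space ?QK) d \<rho> \<theta>"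
        proof -
          have m1: "\<forall>x\<in>space ?QK. \<forall>y\<in>space ?QK. 0 \<le> d x y \<and> (d x y = 0 \<longleftrightarrow> x = y) \<and> d x y = d y x"
            using metric unfolding is_metric_on_def by (rule conjunct1)
          then have "d \<theta> \<theta> = 0" using th by blast
          then show ?thesis using th rho by (simp add: dball_def)
        qed
        have "bdd_above ((\<lambda>\<theta>'. emp_risk N S ?lf \<theta>') ` dball (space ?QK) d \<rho> \<theta>)"
          by (rule bdd_aboveI[where M=L]) (use Rs_bnd[OF _ S] spacePK in \<open>auto simp: dball_def Rs_def\<close>)
        then show ?thesis unfolding Rs_def by (rule cSUP_upper[OF mem])
      qed
      have "ennreal (\<integral>\<theta>. pop_risk D ?lf \<theta> \<partial>?QK)
              \<le> ennreal ((\<integral>\<theta>. Rs S \<theta> \<partial>?QK) + L * sqrt (C / (2 * real N)))"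
        using ineq by (intro ennreal_leI) (simp add: R_def)
      also have "\<dots> = ennreal (\<integral>\<theta>. Rs S \<theta> \<partial>?QK) + ennreal (L * sqrt (C / (2 * real N)))"
        using Rs_bnd[OF _ S] spacePK Lpos C N
        by (intro ennreal_plus integral_nonneg_AE AE_I2) (auto intro!: mult_nonneg_nonneg)
      also have "ennreal (\<integral>\<theta>. Rs S \<theta> \<partial>?QK) = (\<integral>\<^sup>+\<theta>. ennreal (Rs S \<theta>) \<partial>?QK)"
        by (rule nn_integral_eq_integral[symmetric]) (use intRs Rs_bnd[OF _ S] spacePK in \<open>auto intro!: AE_I2\<close>)
      also have "\<dots> \<le> (\<integral>\<^sup>+\<theta>. ennreal (SUP \<theta>' \<in> dball (space ?QK) d \<rho> \<theta>. emp_risk N S ?lf \<theta>') \<partial>?QK)"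
        by (intro nn_integral_mono ennreal_leI Rs_le_sup)
      finally show "ennreal (\<integral>\<theta>. pop_risk D ?lf \<theta> \<partial>?QK)
              \<le> (\<integral>\<^sup>+\<theta>. ennreal (SUP \<theta>' \<in> dball (space ?QK) d \<rho> \<theta>. emp_risk N S ?lf \<theta>') \<partial>?QK)
                 + ennreal (L * sqrt ((real K * KL_divergence (exp 1) P Q + ln (1 / \<delta>)) / (2 * real N)))"
        by (simp add: C_def)
    qed
  qed
qed

end
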